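(* Let $N,s\in\mathbb{N}$ with $N>2$ and $1\le s<N$, and let $t\in\mathbb{R}$ with $0<t<s$. Then there exist unique $\lambda=\lambda(s,t)\in\left[\frac{\pi}{2}-\frac{\pi}{2N}s,\frac{\pi}{2}\right)$ and $C=C(s,t)\in(0,\pi)$ such that $$\delta(\lambda,C)\equiv\frac{\pi}{N}s\quad\text{and}\quad\beta(\lambda,C)\equiv-\frac{\pi}{N}t.$$ Furthermore: (i) $\lambda(s,\frac{s}{2})=\frac{\pi}{2}-\frac{\pi}{2N}s$ and $C(s,\frac{s}{2})=\frac{\pi}{2}$; (ii) for fixed $s$, $\lambda(s,-)$ is two-to-one on $(0,s)$, with $\lambda(s,s-t)=\lambda(s,t)$; (iii) for fixed $s$, $C(s,-)$ is bijective on $(0,s)$, with $C(s,s-t)=\pi-C(s,t)$.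
   Context: $\equiv$ denotes equality modulo $2\pi$. For $\lambda\in[0,\frac{\pi}{2})$ and $\varphi\in\mathbb{R}$ define (modulo $2\pi$) $\beta(\lambda,\varphi)=\varphi-2\arctan\left(\frac{\cos\frac{\lambda}{2}\sin\varphi}{\sin\frac{\lambda}{2}+\cos\frac{\lambda}{2}\cos\varphi}\right)$ and $\delta(\lambda,\varphi)=\beta(\lambda,\varphi+\pi)-\beta(\lambda,\varphi)\equiv\pi-2\arctan(\sin\varphi\tan\lambda)$. *)

theory Defs
  imports Complex_Main
begin

definition cong2pi :: "real \<Rightarrow> real \<Rightarrow> bool" where
  "cong2pi x y \<longleftrightarrow> (\<exists>k::int. x - y = 2 * pi * of_int k)"

text \<open>When the denominator vanishes (the numerator is then nonzero for
  lambda in [0, pi/2)), the arctan is +-pi/2, so 2 arctan is +-pi, which is pi modulo 2 pi.\<close>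
definition beta :: "real \<Rightarrow> real \<Rightarrow> real" where
  "beta l \<phi> =
     (let D = sin (l/2) + cos (l/2) * cos \<phi>
      in \<phi> - (if D = 0 then pi else 2 * arctan (cos (l/2) * sin \<phi> / D)))"

definition delta :: "real \<Rightarrow> real \<Rightarrow> real" where
  "delta l \<phi> = beta l (\<phi> + pi) - beta l \<phi>"

definition is_sol :: "nat \<Rightarrow> nat \<Rightarrow> real \<Rightarrow> real \<Rightarrow> real \<Rightarrow> bool" where
  "is_sol N s t l c \<longleftrightarrow>
     l \<in> {pi/2 - pi / (2 * real N) * real s ..< pi/2} \<and> c \<in> {0 <..< pi} \<and>
     cong2pi (delta l c) (pi / real N * real s) \<and>
     cong2pi (beta l c) (- (pi / real N * t))"

definition lam :: "nat \<Rightarrow> nat \<Rightarrow> real \<Rightarrow> real" where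
  "lam N s t = fst (THE p. is_sol N s t (fst p) (snd p))"

definition Cf :: "nat \<Rightarrow> nat \<Rightarrow> real \<Rightarrow> real" where
  "Cf N s t = snd (THE p. is_sol N s t (fst p) (snd p))"

end

theory Submission imports Defs begin

lemma cong2pi_iff: "cong2pi x y \<longleftrightarrow> cos x = cos y \<and> sin x = sin y"
  unfolding cong2pi_def using sin_cos_eq_iff[of x y]
  by (metis add_diff_cancel_left' diff_add_cancel)

lemma cong2pi_refl: "cong2pi x x" by (simp add: cong2pi_iff)
lemma cong2pi_sym: "cong2pi x y \<Longrightarrow> cong2pi y x" by (simp add: cong2pi_iff)
lemma cong2pi_trans: "cong2pi x y \<Longrightarrow> cong2pi y z \<Longrightarrow> cong2pi x z" by (simp add: cong2pi_iff)
lemma cong2pi_add: "cong2pi x y \<Longrightarrow> cong2pi u v \<Longrightarrow> cong2pi (x+u) (y+v)"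
  unfolding cong2pi_def
proof -
  assume "\<exists>k::int. x - y = 2 * pi * of_int k" "\<exists>k::int. u - v = 2 * pi * of_int k"
  then obtain k m :: int where "x - y = 2 * pi * k" "u - v = 2*pi*m" by blast
  then have "x + u - (y + v) = 2*pi*of_int (k+m)" by (simp add: algebra_simps)
  then show "\<exists>k::int. x + u - (y + v) = 2 * pi * of_int k" by blast
qed
lemma cong2pi_neg: "cong2pi x y \<Longrightarrow> cong2pi (-x) (-y)" by (simp add: cong2pi_iff)
lemma cong2pi_2pi: "cong2pi (x + 2*pi) x" by (simp add: cong2pi_iff)
lemma cong2pi_eq: "x = y \<Longrightarrow> cong2pi x y" by (simp add: cong2pi_refl)

lemma beta_cs:
  assumes "0 \<le> l" "l < pi/2"
  shows "cos (beta l p) = (sin l + cos p) / (1 + sin l * cos p)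
       \<and> sin (beta l p) = - (cos l * sin p) / (1 + sin l * cos p)"
proof -
  define sa where "sa = sin (l/2)"
  define ca where "ca = cos (l/2)"
  define x where "x = cos p"
  define y where "y = sin p"
  have S: "sin l = 2*sa*ca" unfolding sa_def ca_def using sin_double[of "l/2"] by simp
  have C: "cos l = ca^2 - sa^2" unfolding sa_def ca_def using cos_double[of "l/2"] by simp
  have sc: "sa^2 + ca^2 = 1" unfolding sa_def ca_def by simp
  have xy: "x^2 + y^2 = 1" unfolding x_def y_def by simp
  have sl: "sin l < 1" "0 \<le> sin l"
    using assms sin_mono_less_eq[of l "pi/2"] apply simp
    using assms by (simp add: sin_ge_zero)
  have xb: "-1 \<le> x" "x \<le> 1" unfolding x_def by auto
  have den: "1 + sin l * x > 0"
  proof -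
    have "sin l * x \<ge> - sin l" using sl xb
      by (metis minus_mult_right mult.right_neutral mult_left_mono neg_le_iff_le)
    then show ?thesis using sl by linarith
  qed
  define D where "D = sa + ca * x"
  define Nn where "Nn = ca * y"
  have bdef: "beta l p = p - (if D = 0 then pi else 2 * arctan (Nn / D))"
    unfolding beta_def D_def Nn_def sa_def ca_def x_def y_def Let_def by simp
  show ?thesis
  proof (cases "D = 0")
    case True
    have e1: "cos (beta l p) = - x" "sin (beta l p) = - y"
      using True bdef x_def y_def by (simp_all add: cos_diff sin_diff)
    have ca_x: "ca * x = - sa" using True D_def by simp
    have k1: "- x * (1 + sin l * x) = sin l + x"
      unfolding S using ca_x sc by algebra
    have k2: "1 + sin l * x = cos l"
      unfolding S C using ca_x sc by algebra
    show ?thesis unfolding e1 x_def[symmetric] y_def[symmetric]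
      using den k1 k2 by (simp add: field_simps) (metis k1 k2 minus_mult_left add.commute)
  next
    case False
    define u where "u = Nn / D"
    have pos: "1 + u^2 > 0" by (simp add: add_pos_nonneg)
    have pos': "1 + u^2 \<noteq> 0" "sqrt (1 + u^2) \<noteq> 0" using pos by auto
    have cu: "cos (2 * arctan u) = (1 - u^2)/(1+u^2)"
      unfolding cos_double cos_arctan sin_arctan
      using pos' by (simp add: power_divide field_simps)
    have su: "sin (2 * arctan u) = 2*u/(1+u^2)"
      unfolding sin_double cos_arctan sin_arctan
      using pos' by (simp add: power_divide field_simps)
    have DN: "D^2 + Nn^2 = 1 + sin l * x"
      unfolding D_def Nn_def S using sc xy by algebra
    have dn0: "D^2 + Nn^2 \<noteq> 0" using False by (simp add: add_pos_nonneg)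
    have uD: "u^2 * D^2 = Nn^2" using False u_def by (simp add: power_divide)
    have D2: "D^2 \<noteq> 0" using False by simp
    have cu2: "(1 - u^2)/(1+u^2) = (D^2 - Nn^2)/(1 + sin l * x)"
    proof -
      have "(1 - u^2)/(1+u^2) = ((1-u^2)*D^2)/((1+u^2)*D^2)" using D2 by simp
      also have "\<dots> = (D^2 - Nn^2)/(D^2 + Nn^2)" using uD by (simp add: algebra_simps)
      finally show ?thesis using DN by simp
    qed
    have su2: "2*u/(1+u^2) = 2*Nn*D/(1 + sin l * x)"
    proof -
      have "2*u/(1+u^2) = (2*u*D^2)/((1+u^2)*D^2)" using D2 by simp
      also have "\<dots> = (2*Nn*D)/(D^2 + Nn^2)" using uD False u_def by (simp add: algebra_simps power2_eq_square)
      finally show ?thesis using DN by simp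
    qed
    have bb: "beta l p = p - 2 * arctan u" using bdef False u_def by simp
    have n1: "x * (D^2 - Nn^2) + y * (2*Nn*D) = sin l + x"
      unfolding D_def Nn_def S using sc xy by algebra
    have n2: "y * (D^2 - Nn^2) - x * (2*Nn*D) = - (cos l * y)"
      unfolding D_def Nn_def C using sc xy by algebra
    have "cos (beta l p) = x * ((D^2 - Nn^2)/(1 + sin l * x)) + y * (2*Nn*D/(1 + sin l * x))"
      unfolding bb cos_diff cu su cu2 su2 x_def y_def by simp
    also have "\<dots> = (x * (D^2 - Nn^2) + y * (2*Nn*D)) / (1 + sin l * x)" by (simp add: add_divide_distrib)
    also have "\<dots> = (sin l + x) / (1 + sin l * x)" using n1 by simp
    finally have r1: "cos (beta l p) = (sin l + x) / (1 + sin l * x)" .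
    have "sin (beta l p) = y * ((D^2 - Nn^2)/(1 + sin l * x)) - x * (2*Nn*D/(1 + sin l * x))"
      unfolding bb sin_diff cu su cu2 su2 x_def y_def by simp
    also have "\<dots> = (y * (D^2 - Nn^2) - x * (2*Nn*D)) / (1 + sin l * x)" by (metis times_divide_eq_right diff_divide_distrib)
    also have "\<dots> = - (cos l * y) / (1 + sin l * x)" using n2 by simp
    finally have r2: "sin (beta l p) = - (cos l * y) / (1 + sin l * x)" .
    show ?thesis using r1 r2 x_def y_def by simp
  qed
qed


lemma sin_cos_basic:
  assumes "0 \<le> l" "l < pi/2"
  shows "0 \<le> sin l" "sin l < 1" "0 < cos l"
  using assms sin_ge_zero[of l] sin_mono_less_eq[of l "pi/2"] cos_gt_zero_pi[of l] by auto

lemma den_pos: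
  assumes "0 \<le> l" "l < pi/2"
  shows "1 + sin l * cos p > 0" "1 - sin l * cos p > 0"
proof -
  have a: "0 \<le> sin l" "sin l < 1" using sin_cos_basic assms by auto
  have "\<bar>sin l * cos p\<bar> \<le> sin l" using a abs_cos_le_one[of p]
    by (simp add: abs_mult mult_left_le)
  then show "1 + sin l * cos p > 0" "1 - sin l * cos p > 0" using a by linarith+
qed

lemma fr1: "((a::real)/b)*(c/d) + (e/b)*(f/d) = (a*c + e*f)/(b*d)"
  by (metis add_divide_distrib times_divide_times_eq)
lemma fr2: "((a::real)/b)*(c/d) - (e/b)*(f/d) = (a*c - e*f)/(b*d)"
  by (metis diff_divide_distrib times_divide_times_eq)

lemma delta_cs:
  fixes l c :: real
  assumes "0 \<le> l" "l < pi/2"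
  defines "T \<equiv> sin c * tan l"
  shows "cos (delta l c) = (T^2 - 1)/(T^2 + 1) \<and> sin (delta l c) = 2*T/(T^2+1)"
proof -
  define S where "S = sin l"
  define Cl where "Cl = cos l"
  define x where "x = cos c"
  define y where "y = sin c"
  have b1: "cos (beta l c) = (S + x)/(1 + S*x)" "sin (beta l c) = - (Cl * y)/(1 + S*x)"
    using beta_cs[OF assms(1,2), of c] unfolding S_def Cl_def x_def y_def by auto
  have b2: "cos (beta l (c+pi)) = (S - x)/(1 - S*x)" "sin (beta l (c+pi)) = (Cl * y)/(1 - S*x)"
    using beta_cs[OF assms(1,2), of "c+pi"] unfolding S_def Cl_def x_def y_def by auto
  have d1: "1 + S*x > 0" "1 - S*x > 0" using den_pos[OF assms(1,2)] S_def x_def by auto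
  have Clp: "Cl > 0" using sin_cos_basic[OF assms(1,2)] Cl_def by auto
  have Tdef: "T = y * S / Cl" unfolding T_def y_def S_def Cl_def tan_def by simp
  have SC: "S^2 + Cl^2 = 1" unfolding S_def Cl_def by simp
  have xy: "x^2 + y^2 = 1" unfolding x_def y_def by simp
  have Tp: "T^2 + 1 > 0" by (metis add_pos_nonneg zero_le_power2 zero_less_one add.commute)
  have cd: "cos (delta l c) = ((S - x)*(S + x) + (Cl*y)*(-(Cl*y)))/((1 - S*x)*(1 + S*x))"
    unfolding delta_def cos_diff b1 b2 by (rule fr1)
  have sd: "sin (delta l c) = ((Cl*y)*(S + x) - (S - x)*(-(Cl*y)))/((1 - S*x)*(1 + S*x))"
    unfolding delta_def sin_diff b1 b2 by (rule fr2)
  have nz: "(1 - S*x)*(1 + S*x) \<noteq> 0" using d1 by auto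
  have CT: "Cl^2 * T^2 = y^2 * S^2" unfolding Tdef using Clp by (simp add: power_divide power_mult_distrib)
  have e1: "((S - x)*(S + x) + (Cl*y)*(-(Cl*y)))/((1 - S*x)*(1 + S*x)) = (T^2 - 1)/(T^2 + 1)"
  proof -
    have "((S - x)*(S + x) + (Cl*y)*(-(Cl*y))) * (T^2 + 1) = (T^2 - 1) * ((1 - S*x)*(1 + S*x))"
    proof -
      have "Cl^2 * (((S - x)*(S + x) + (Cl*y)*(-(Cl*y))) * (T^2 + 1) - (T^2 - 1) * ((1 - S*x)*(1 + S*x))) = 0"
        using CT SC xy by algebra
      then show ?thesis using Clp by simp
    qed
    then show ?thesis using nz Tp by (simp add: frac_eq_eq)
  qed
  have e2: "((Cl*y)*(S + x) - (S - x)*(-(Cl*y)))/((1 - S*x)*(1 + S*x)) = 2*T/(T^2 + 1)"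
  proof -
    have "((Cl*y)*(S + x) - (S - x)*(-(Cl*y))) * (T^2 + 1) = (2*T) * ((1 - S*x)*(1 + S*x))"
    proof -
      have TC: "T * Cl = y * S" unfolding Tdef using Clp by simp
      have "Cl * (((Cl*y)*(S + x) - (S - x)*(-(Cl*y))) * (T^2 + 1) - (2*T) * ((1 - S*x)*(1 + S*x))) = 0"
        using CT TC SC xy by algebra
      then show ?thesis using Clp by simp
    qed
    then show ?thesis using nz Tp by (simp add: frac_eq_eq)
  qed
  show ?thesis using cd sd e1 e2 by simp
qed


definition gg :: "real \<Rightarrow> real \<Rightarrow> real" where
  "gg l c = (sin l + cos c)/(1 + sin l * cos c)"

lemma beta_iff:
  assumes "0 \<le> l" "l < pi/2"
  shows "cong2pi (beta l c) (-a) \<longleftrightarrow> cos a = gg l c \<and> sin a = cos l * sin c / (1 + sin l * cos c)"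
  unfolding cong2pi_iff gg_def using beta_cs[OF assms, of c] by auto

lemma sin_beta_neg:
  assumes "0 \<le> l" "l < pi/2" "0 < c" "c < pi"
  shows "cos l * sin c / (1 + sin l * cos c) > 0"
  using sin_cos_basic[OF assms(1,2)] den_pos[OF assms(1,2), of c] sin_gt_zero[OF assms(3,4)]
  by simp

lemma gg_sq:
  assumes "0 \<le> l" "l < pi/2"
  shows "(gg l c)^2 + (cos l * sin c / (1 + sin l * cos c))^2 = 1"
proof -
  have "(cos (beta l c))^2 + (sin (beta l c))^2 = 1" by simp
  then show ?thesis using beta_cs[OF assms, of c] unfolding gg_def by (simp add: power2_eq_square)
qed

lemma beta_iff2:
  assumes "0 \<le> l" "l < pi/2" "0 < c" "c < pi" "0 < a" "a < pi"
  shows "cong2pi (beta l c) (-a) \<longleftrightarrow> cos a = gg l c"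
proof -
  define Q where "Q = cos l * sin c / (1 + sin l * cos c)"
  have Qp: "Q > 0" using sin_beta_neg[OF assms(1-4)] Q_def by simp
  have sa: "sin a > 0" using sin_gt_zero assms by auto
  have "cos a = gg l c \<Longrightarrow> sin a = Q"
  proof -
    assume h: "cos a = gg l c"
    have "(sin a)^2 = 1 - (cos a)^2" by (simp add: sin_squared_eq)
    also have "\<dots> = Q^2" using gg_sq[OF assms(1,2), of c] h Q_def by simp
    finally show ?thesis using power2_eq_imp_eq sa Qp by (metis less_eq_real_def)
  qed
  then show ?thesis using beta_iff[OF assms(1,2)] Q_def by auto
qed

locale solctx =
  fixes N s :: nat
  assumes N2: "N > 2" and s1: "1 \<le> s" and sN: "s < N"
begin

definition "th = pi / real N * real s"
definition "l0 = pi/2 - pi / (2 * real N) * real s"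
definition "K = tan l0"
definition "L c = arctan (K / sin c)"
definition "G c = gg (L c) c"

lemma Npos: "real N > 0" using N2 by simp

lemma th_bounds: "0 < th" "th < pi"
proof -
  have "real s / real N < 1" using sN Npos by simp
  then have "pi * (real s / real N) < pi * 1" by (intro mult_strict_left_mono) auto
  then show "th < pi" unfolding th_def by simp
  show "0 < th" unfolding th_def using s1 Npos by simp
qed

lemma l0_th: "l0 = pi/2 - th/2" unfolding l0_def th_def by simp

lemma l0_bounds: "0 < l0" "l0 < pi/2" using th_bounds l0_th by auto

lemma K_pos: "K > 0" unfolding K_def using l0_bounds by (simp add: tan_gt_zero)

lemma arctan_K: "arctan K = l0" unfolding K_def using l0_bounds by (simp add: arctan_tan)

lemma cos_th: "cos th = (K^2 - 1)/(K^2 + 1)" and sin_th: "sin th = 2*K/(K^2+1)"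
proof -
  have th: "th = pi - 2*l0" using l0_th by simp
  have c0: "cos l0 > 0" using l0_bounds cos_gt_zero_pi by auto
  have sc: "(sin l0)^2 + (cos l0)^2 = 1" by simp
  have Kd: "K = sin l0 / cos l0" unfolding K_def tan_def ..
  have "(K^2 - 1)/(K^2 + 1) = ((sin l0)^2 - (cos l0)^2) / ((sin l0)^2 + (cos l0)^2)"
    unfolding Kd using c0 by (simp add: field_simps power_divide)
  also have "\<dots> = cos th" unfolding th using sc by (simp add: cos_double)
  finally show "cos th = (K^2 - 1)/(K^2 + 1)" ..
  have "2*K/(K^2 + 1) = (2 * sin l0 * cos l0) / ((sin l0)^2 + (cos l0)^2)"
    unfolding Kd using c0 by (simp add: field_simps power_divide power2_eq_square)
  also have "\<dots> = sin th" unfolding th using sc by (simp add: sin_double)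
  finally show "sin th = 2*K/(K^2 + 1)" ..
qed

lemma delta_iff:
  assumes "0 \<le> l" "l < pi/2"
  shows "cong2pi (delta l c) th \<longleftrightarrow> sin c * tan l = K"
proof -
  define T where "T = sin c * tan l"
  have Tp: "T^2 + 1 > 0" by (metis add_pos_nonneg zero_le_power2 zero_less_one add.commute)
  have Kp: "K^2 + 1 > 0" by (metis add_pos_nonneg zero_le_power2 zero_less_one add.commute)
  have "cong2pi (delta l c) th \<longleftrightarrow> (T^2 - 1)/(T^2 + 1) = (K^2 - 1)/(K^2 + 1) \<and> 2*T/(T^2+1) = 2*K/(K^2+1)"
    unfolding cong2pi_iff cos_th sin_th using delta_cs[OF assms, of c] T_def by auto
  also have "\<dots> \<longleftrightarrow> T = K"
  proof
    assume h: "(T^2 - 1)/(T^2 + 1) = (K^2 - 1)/(K^2 + 1) \<and> 2*T/(T^2+1) = 2*K/(K^2+1)"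
    then have "(T^2 - 1)*(K^2 + 1) = (K^2 - 1)*(T^2 + 1)" using Tp Kp by (simp add: frac_eq_eq)
    then have "T^2 = K^2" by (simp add: algebra_simps)
    then show "T = K" using h Kp by auto
  qed simp
  finally show ?thesis using T_def by simp
qed


lemma L_props:
  assumes "0 < c" "c < pi"
  shows "l0 \<le> L c" "L c < pi/2" "0 \<le> L c" "sin c * tan (L c) = K"
proof -
  have sc: "0 < sin c" "sin c \<le> 1" using sin_gt_zero assms by auto
  have "K * sin c \<le> K" using K_pos sc by (simp add: mult_left_le)
  then have "K \<le> K / sin c" using sc by (simp add: le_divide_eq)
  then show "l0 \<le> L c" unfolding L_def arctan_K[symmetric] by (simp add: arctan_le_iff)
  show "L c < pi/2" unfolding L_def by (rule arctan_ubound)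
  then show "0 \<le> L c" using \<open>l0 \<le> L c\<close> l0_bounds by linarith
  show "sin c * tan (L c) = K" unfolding L_def tan_arctan using sc by simp
qed

lemma char:
  "is_sol N s t l c \<longleftrightarrow> 0 < c \<and> c < pi \<and> l = L c \<and> cong2pi (beta l c) (-(pi / real N * t))"
proof
  assume h: "is_sol N s t l c"
  then have hl: "l0 \<le> l" "l < pi/2" and hc: "0 < c" "c < pi"
    and hd: "cong2pi (delta l c) th" and hb: "cong2pi (beta l c) (-(pi / real N * t))"
    unfolding is_sol_def l0_def[symmetric] th_def[symmetric] by auto
  have l0': "0 \<le> l" using hl l0_bounds by linarith
  have "sin c * tan l = K" using delta_iff[OF l0' hl(2)] hd by simp
  moreover have "sin c > 0" using sin_gt_zero hc by auto
  ultimately have "tan l = K / sin c" by (simp add: field_simps)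
  then have "l = L c" unfolding L_def using arctan_tan[of l] hl l0' by simp
  then show "0 < c \<and> c < pi \<and> l = L c \<and> cong2pi (beta l c) (-(pi / real N * t))" using hc hb by simp
next
  assume h: "0 < c \<and> c < pi \<and> l = L c \<and> cong2pi (beta l c) (-(pi / real N * t))"
  then have hc: "0 < c" "c < pi" and hl: "l = L c" and hb: "cong2pi (beta l c) (-(pi / real N * t))" by auto
  note LP = L_props[OF hc]
  have "cong2pi (delta l c) th" using delta_iff[of l c] LP hl by simp
  then show "is_sol N s t l c"
    unfolding is_sol_def l0_def[symmetric] th_def[symmetric] using LP hl hc hb by auto
qed

lemma char2:
  assumes "0 < t" "t < real N"
  shows "is_sol N s t l c \<longleftrightarrow> 0 < c \<and> c < pi \<and> l = L c \<and> G c = cos (pi / real N * t)"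
proof -
  have a: "0 < pi / real N * t" using assms Npos by simp
  have "pi / real N * t < pi / real N * real N" using assms Npos by (intro mult_strict_left_mono) auto
  then have b: "pi / real N * t < pi" using Npos by simp
  show ?thesis unfolding char
  proof (intro iffI)
    assume "0 < c \<and> c < pi \<and> l = L c \<and> cong2pi (beta l c) (-(pi / real N * t))"
    then show "0 < c \<and> c < pi \<and> l = L c \<and> G c = cos (pi / real N * t)"
      using beta_iff2[of l c "pi / real N * t"] L_props[of c] a b unfolding G_def by auto
  next
    assume "0 < c \<and> c < pi \<and> l = L c \<and> G c = cos (pi / real N * t)"
    then show "0 < c \<and> c < pi \<and> l = L c \<and> cong2pi (beta l c) (-(pi / real N * t))"
      using beta_iff2[of l c "pi / real N * t"] L_props[of c] a b unfolding G_def by auto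
  qed
qed

lemma t_pos:
  assumes "is_sol N s t l c" "\<bar>t\<bar> < real N"
  shows "0 < t"
proof (rule ccontr)
  assume "\<not> 0 < t"
  then have t0: "t \<le> 0" by simp
  from assms(1) have hc: "0 < c" "c < pi" and hl: "l = L c" and hb: "cong2pi (beta l c) (-(pi / real N * t))"
    unfolding char by auto
  note LP = L_props[OF hc]
  have "sin (pi / real N * t) > 0"
    using beta_iff[of l c "pi / real N * t"] sin_beta_neg[of l c] LP hl hc hb by auto
  moreover have "sin (pi / real N * t) \<le> 0"
  proof -
    have "- t < real N" using assms(2) by simp
    then have "pi / real N * (-t) < pi / real N * real N" using Npos by (intro mult_strict_left_mono) auto
    then have "pi / real N * (-t) \<le> pi" using Npos by simp
    moreover have "0 \<le> pi / real N * (-t)" using t0 Npos by (intro mult_nonneg_nonneg) auto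
    ultimately have "0 \<le> sin (pi / real N * (-t))" using sin_ge_zero by blast
    then show ?thesis by simp
  qed
  ultimately show False by simp
qed

lemma beta_refl: "0 \<le> l \<Longrightarrow> l < pi/2 \<Longrightarrow> cong2pi (beta l (pi - c)) (- beta l (c + pi))"
  unfolding cong2pi_iff using beta_cs[of l "pi - c"] beta_cs[of l "c + pi"] by simp

lemma sym:
  assumes "is_sol N s t l c"
  shows "is_sol N s (real s - t) l (pi - c)"
proof -
  from assms have hc: "0 < c" "c < pi" and hl: "l = L c" and hb: "cong2pi (beta l c) (-(pi / real N * t))"
    unfolding char by auto
  from assms have hd: "cong2pi (delta l c) th" unfolding is_sol_def th_def by auto
  note LP = L_props[OF hc]
  have "cong2pi (delta l c + beta l c) (th + -(pi / real N * t))" using cong2pi_add[OF hd hb] .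
  moreover have "delta l c + beta l c = beta l (c + pi)" unfolding delta_def by (simp add: add.commute)
  ultimately have "cong2pi (- beta l (c + pi)) (-(th + -(pi / real N * t)))" using cong2pi_neg by metis
  then have "cong2pi (beta l (pi - c)) (-(th + -(pi / real N * t)))"
    using beta_refl[of l c] LP hl cong2pi_trans by blast
  moreover have "-(th + -(pi / real N * t)) = -(pi / real N * (real s - t))"
    unfolding th_def by (simp add: right_diff_distrib)
  moreover have "L (pi - c) = L c" unfolding L_def by simp
  ultimately show ?thesis unfolding char using hc hl by simp
qed


lemma gmono:
  fixes S1 S2 x1 x2 :: real
  assumes "0 \<le> S2" "S2 \<le> S1" "S1 < 1" "0 \<le> x2" "x2 < x1" "x1 \<le> 1"
  shows "(S2 + x2)/(1 + S2*x2) < (S1 + x1)/(1 + S1*x1)"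
proof -
  have p1: "S2*x2 \<ge> 0" "S1*x1 \<ge> 0" using assms by auto
  have d1: "1 + S2*x2 > 0" "1 + S1*x1 > 0" using p1 by linarith+
  have "x1*x2 \<le> 1*1" using assms by (intro mult_mono) auto
  then have a: "(S1-S2)*(1-x1*x2) \<ge> 0" using assms by (intro mult_nonneg_nonneg) auto
  have "S1*S2 \<le> S1*1" using assms by (intro mult_left_mono) auto
  then have "S1*S2 < 1" using assms by linarith
  then have b: "(x1-x2)*(1-S1*S2) > 0" using assms by (intro mult_pos_pos) auto
  have e: "(S1 + x1)*(1 + S2*x2) - (S2 + x2)*(1 + S1*x1) = (S1-S2)*(1-x1*x2) + (x1-x2)*(1-S1*S2)"
    by algebra
  have "(S1 + x1)/(1 + S1*x1) - (S2 + x2)/(1 + S2*x2)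
      = ((S1 + x1)*(1 + S2*x2) - (S2 + x2)*(1 + S1*x1)) / ((1 + S1*x1)*(1 + S2*x2))"
    using d1 by (simp add: diff_frac_eq)
  also have "\<dots> > 0" using a b e d1 by (intro divide_pos_pos) auto
  finally show ?thesis by simp
qed

lemma G_mono:
  assumes "0 < c1" "c1 < c2" "c2 \<le> pi/2"
  shows "G c2 < G c1"
proof -
  have c: "0 < c2" "c2 < pi" "c1 < pi" using assms by auto
  have s1p: "0 < sin c1" using sin_gt_zero assms c by auto
  have ss: "sin c1 < sin c2" using sin_mono_less_eq[of c1 c2] assms by auto
  have "K / sin c2 < K / sin c1" using K_pos s1p ss by (simp add: divide_strict_left_mono)
  then have LL: "L c2 < L c1" unfolding L_def by (simp add: arctan_less_iff)
  note P1 = L_props[OF assms(1) c(3)] and P2 = L_props[OF c(1,2)]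
  have SS: "sin (L c2) < sin (L c1)" using sin_mono_less_eq[of "L c2" "L c1"] LL P1 P2 by auto
  have x: "cos c2 < cos c1" using cos_mono_less_eq[of c2 c1] assms by auto
  have "0 \<le> cos c2" using cos_ge_zero assms by auto
  then show ?thesis unfolding G_def gg_def
    using gmono[of "sin (L c2)" "sin (L c1)" "cos c2" "cos c1"] SS x
      sin_cos_basic[OF P1(3) P1(2)] sin_cos_basic[OF P2(3) P2(2)] by auto
qed

lemma G_pi2': "G (pi/2) = cos (th/2)"
proof -
  have "L (pi/2) = l0" unfolding L_def using arctan_K by simp
  then have "G (pi/2) = sin l0" unfolding G_def gg_def by simp
  also have "\<dots> = cos (th/2)" unfolding l0_th by (simp add: sin_cos_eq)
  finally show ?thesis .
qed

lemma half:
  assumes "0 < t" "t < real N" "is_sol N s t l c" "c \<le> pi/2"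
  shows "t \<le> real s / 2" and "c < pi/2 \<Longrightarrow> t < real s / 2"
proof -
  have h: "0 < c" "G c = cos (pi / real N * t)" using assms char2 by auto
  have a: "0 < pi / real N * t" using assms Npos by simp
  have "pi / real N * t < pi / real N * real N" using assms Npos by (intro mult_strict_left_mono) auto
  then have b: "pi / real N * t < pi" using Npos by simp
  have bb: "pi / real N * (real s / 2) = th / 2" unfolding th_def by simp
  have "G (pi/2) \<le> G c"
  proof (cases "c = pi/2")
    case True then show ?thesis by (simp only: order_refl)
  next
    case False then show ?thesis using G_mono[of c "pi/2"] h assms(4) by auto
  qed
  then have "cos (th/2) \<le> cos (pi / real N * t)" using h G_pi2' by simp
  then have "pi / real N * t \<le> th/2" using cos_mono_le_eq[of "th/2" "pi / real N * t"] a b th_bounds by auto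
  then show "t \<le> real s / 2" using Npos unfolding th_def by (simp add: field_simps)
  assume "c < pi/2"
  then have "G (pi/2) < G c" using G_mono[of c "pi/2"] h by auto
  then have "cos (th/2) < cos (pi / real N * t)" using h G_pi2' by simp
  then have "pi / real N * t < th/2" using cos_mono_less_eq[of "th/2" "pi / real N * t"] a b th_bounds by auto
  then show "t < real s / 2" using Npos unfolding th_def by (simp add: field_simps)
qed

definition "P c = K / sqrt ((sin c)^2 + K^2)"
definition "G' c = (P c + cos c)/(1 + P c * cos c)"

lemma sinL: assumes "0 < c" "c < pi" shows "sin (L c) = P c"
proof -
  have y: "sin c > 0" using sin_gt_zero assms by auto
  have "1 + (K / sin c)^2 = ((sin c)^2 + K^2) / (sin c)^2" using y by (simp add: field_simps power_divide)
  then have "sqrt (1 + (K / sin c)^2) = sqrt ((sin c)^2 + K^2) / sin c"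
    using y by (simp add: real_sqrt_divide)
  moreover have "sqrt ((sin c)^2 + K^2) > 0" using K_pos by (simp add: add_nonneg_pos)
  ultimately show ?thesis unfolding L_def sin_arctan P_def using y by (simp add: field_simps)
qed

lemma G_eq: "0 < c \<Longrightarrow> c < pi \<Longrightarrow> G c = G' c"
  unfolding G_def G'_def gg_def using sinL by simp

lemma P_pos: "P c > 0" unfolding P_def using K_pos by (simp add: add_nonneg_pos)

lemma G'0: "G' 0 = 1"
proof -
  have "P 0 = 1" unfolding P_def using K_pos by simp
  then show ?thesis unfolding G'_def by simp
qed

lemma G'_cont: "continuous_on {0..pi/2} G'"
proof -
  have sq: "\<And>c. sqrt ((sin c)^2 + K^2) \<noteq> 0" using K_pos by (simp add: add_nonneg_pos)
  have dn: "\<And>c. c \<in> {0..pi/2} \<Longrightarrow> 1 + P c * cos c \<noteq> 0"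
  proof -
    fix c :: real assume "c \<in> {0..pi/2}"
    then have "cos c \<ge> 0" using cos_ge_zero by auto
    then have "P c * cos c \<ge> 0" using P_pos[of c] by simp
    then have "1 + P c * cos c > 0" by linarith
    then show "1 + P c * cos c \<noteq> 0" by simp
  qed
  have cP: "continuous_on {0..pi/2} P" unfolding P_def using sq by (intro continuous_intros) auto
  show ?thesis unfolding G'_def using dn cP by (intro continuous_intros) auto
qed

lemma exist_half:
  assumes "0 < t" "t \<le> real s / 2"
  shows "\<exists>c. 0 < c \<and> c \<le> pi/2 \<and> G c = cos (pi / real N * t)"
proof -
  have a: "0 < pi / real N * t" using assms Npos by simp
  have bb: "pi / real N * (real s / 2) = th / 2" unfolding th_def by simp
  have b: "pi / real N * t \<le> th/2" unfolding bb[symmetric] using assms Npos by (intro mult_left_mono) auto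
  have "pi / real N * t \<le> pi" using b th_bounds by linarith
  then have v1: "cos (pi / real N * t) < 1" using cos_monotone_0_pi[of 0 "pi / real N * t"] a by simp
  have v2: "cos (th/2) \<le> cos (pi / real N * t)" using cos_mono_le_eq[of "th/2" "pi / real N * t"] a b th_bounds \<open>pi / real N * t \<le> pi\<close> by auto
  have g2: "G' (pi/2) = cos (th/2)" using G_eq[of "pi/2"] G_pi2' by simp
  obtain c where c: "0 \<le> c" "c \<le> pi/2" "G' c = cos (pi / real N * t)"
    using IVT2'[of G' "pi/2" "cos (pi / real N * t)" 0] G'_cont g2 v1 v2 G'0 by auto
  have "c \<noteq> 0" using c G'0 v1 by auto
  then have "0 < c" using c by simp
  then show ?thesis using c G_eq[of c] by auto
qed


lemma G_inj:
  assumes "0 < c1" "0 < c2" "c1 \<le> pi/2" "c2 \<le> pi/2" "G c1 = G c2"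
  shows "c1 = c2"
proof (rule ccontr)
  assume "c1 \<noteq> c2"
  then consider "c1 < c2" | "c2 < c1" by linarith
  then show False
  proof cases
    case 1 then show False using G_mono[of c1 c2] assms by simp
  next
    case 2 then show False using G_mono[of c2 c1] assms by simp
  qed
qed

lemma sol_G:
  assumes "is_sol N s t l c" "0 < t" "t < real N"
  shows "0 < c" "c < pi" "l = L c" "G c = cos (pi / real N * t)"
  using assms char2 by auto

lemma uniq_c:
  assumes t: "0 < t" "t < real s" and h1: "is_sol N s t l1 c1" and h2: "is_sol N s t l2 c2"
  shows "c1 = c2"
proof -
  have tN: "t < real N" using t sN by simp
  have t': "0 < real s - t" "real s - t < real N" using t sN by auto
  note A1 = sol_G[OF h1 t(1) tN] and A2 = sol_G[OF h2 t(1) tN]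
  note B1 = sol_G[OF sym[OF h1] t'] and B2 = sol_G[OF sym[OF h2] t']
  have m: False if "c1 < pi/2" "pi/2 < c2" "is_sol N s t l1 c1" "is_sol N s t l2 c2" for c1 c2 l1 l2
  proof -
    have "t < real s / 2" using half(2)[OF t(1) tN that(3)] that(1) by simp
    moreover have "real s - t < real s / 2" using half(2)[OF t' sym[OF that(4)]] that(2) by simp
    ultimately show False by simp
  qed
  consider "c1 \<le> pi/2" "c2 \<le> pi/2" | "pi/2 \<le> c1" "pi/2 \<le> c2" | "c1 < pi/2" "pi/2 < c2" | "c2 < pi/2" "pi/2 < c1"
    by linarith
  then show ?thesis
  proof cases
    case 1 then show ?thesis using G_inj[of c1 c2] A1 A2 by simp
  next
    case 2 then have "pi - c1 = pi - c2" using G_inj[of "pi - c1" "pi - c2"] B1 B2 by simp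
    then show ?thesis by simp
  next
    case 3 then show ?thesis using m h1 h2 by blast
  next
    case 4 then show ?thesis using m h1 h2 by blast
  qed
qed

lemma exist:
  assumes "0 < t" "t < real s"
  shows "\<exists>c. is_sol N s t (L c) c"
proof (cases "t \<le> real s / 2")
  case True
  obtain c where c: "0 < c" "c \<le> pi/2" "G c = cos (pi / real N * t)" using exist_half[OF assms(1) True] by blast
  have "is_sol N s t (L c) c" using char2[of t "L c" c] c assms sN by simp
  then show ?thesis by blast
next
  case False
  obtain c where c: "0 < c" "c \<le> pi/2" "G c = cos (pi / real N * (real s - t))"
    using exist_half[of "real s - t"] False assms by auto
  have "is_sol N s (real s - t) (L c) c" using char2[of "real s - t" "L c" c] c assms sN by simp
  from sym[OF this] have "is_sol N s t (L c) (pi - c)" by simp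
  moreover have "L (pi - c) = L c" unfolding L_def by simp
  ultimately show ?thesis by metis
qed

lemma ex1:
  assumes "0 < t" "t < real s"
  shows "\<exists>!p. is_sol N s t (fst p) (snd p)"
proof -
  obtain c where c: "is_sol N s t (L c) c" using exist[OF assms] by blast
  show ?thesis
  proof (rule ex1I[of _ "(L c, c)"])
    show "is_sol N s t (fst (L c, c)) (snd (L c, c))" using c by simp
  next
    fix p assume h: "is_sol N s t (fst p) (snd p)"
    have "snd p = c" using uniq_c[OF assms h c] .
    moreover have "fst p = L (snd p)" using h char by blast
    ultimately show "p = (L c, c)" by (metis prod.collapse)
  qed
qed

lemma the_eq:
  assumes "0 < t" "t < real s" "is_sol N s t l c"
  shows "lam N s t = l" "Cf N s t = c"
proof -
  have "(THE p. is_sol N s t (fst p) (snd p)) = (l, c)"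
    using the1_equality[OF ex1[OF assms(1,2)], of "(l,c)"] assms(3) by simp
  then show "lam N s t = l" "Cf N s t = c" unfolding lam_def Cf_def by simp_all
qed

lemma lamCf:
  assumes "0 < t" "t < real s"
  shows "is_sol N s t (lam N s t) (Cf N s t)"
proof -
  have "is_sol N s t (fst (THE p. is_sol N s t (fst p) (snd p))) (snd (THE p. is_sol N s t (fst p) (snd p)))"
    using theI'[OF ex1[OF assms]] .
  then show ?thesis unfolding lam_def Cf_def .
qed

lemma t_inj:
  assumes "0 < t1" "t1 < real N" "0 < t2" "t2 < real N" "is_sol N s t1 l c" "is_sol N s t2 l c"
  shows "t1 = t2"
proof -
  have "cos (pi / real N * t1) = cos (pi / real N * t2)" using sol_G assms by metis
  moreover have "pi / real N * t1 < pi / real N * real N" "pi / real N * t2 < pi / real N * real N"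
    using assms Npos by (intro mult_strict_left_mono; simp)+
  ultimately have "pi / real N * t1 = pi / real N * t2"
    using cos_inj_pi[of "pi / real N * t1" "pi / real N * t2"] assms Npos by simp
  then show ?thesis using Npos by simp
qed

lemma sin_eq_0pi:
  assumes "0 < a" "a < pi" "0 < b" "b < pi" "sin a = sin b"
  shows "a = b \<or> a = pi - b"
proof -
  have "cos \<bar>pi/2 - a\<bar> = sin a" by (simp add: cos_abs_real cos_diff)
  moreover have "cos \<bar>pi/2 - b\<bar> = sin b" by (simp add: cos_abs_real cos_diff)
  ultimately have "cos \<bar>pi/2 - a\<bar> = cos \<bar>pi/2 - b\<bar>" using assms by simp
  then have "\<bar>pi/2 - a\<bar> = \<bar>pi/2 - b\<bar>" using cos_inj_pi[of "\<bar>pi/2 - a\<bar>" "\<bar>pi/2 - b\<bar>"] assms by auto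
  then show ?thesis by (auto simp: abs_if split: if_splits)
qed

lemma G_range:
  assumes "0 < c" "c < pi"
  shows "-1 < G c" "G c < 1"
proof -
  note LP = L_props[OF assms]
  define S where "S = sin (L c)"
  define x where "x = cos c"
  have S: "0 \<le> S" "S < 1" using sin_cos_basic[OF LP(3) LP(2)] S_def by auto
  have x: "-1 < x" "x < 1" using assms x_def cos_monotone_0_pi[of 0 c] cos_monotone_0_pi[of c pi] by auto
  have d: "1 + S*x > 0" using den_pos[OF LP(3) LP(2), of c] S_def x_def by simp
  have "(1 - S)*(1 - x) > 0" using S x by simp
  then have "S + x < 1 + S*x" by (simp add: algebra_simps)
  then show "G c < 1" unfolding G_def gg_def S_def[symmetric] x_def[symmetric] using d by simp
  have "(1 + S)*(1 + x) > 0" using S x by simp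
  then have "-1 - S*x < S + x" by (simp add: algebra_simps)
  then show "-1 < G c" unfolding G_def gg_def S_def[symmetric] x_def[symmetric] using d by (simp add: less_divide_eq)
qed

lemma main:
  "(\<forall>t::real. 0 < t \<and> t < real s \<longrightarrow> (\<exists>!p. is_sol N s t (fst p) (snd p)))
    \<and> lam N s (real s / 2) = pi/2 - pi / (2 * real N) * real s
    \<and> Cf N s (real s / 2) = pi/2
    \<and> (\<forall>t::real. 0 < t \<and> t < real s \<longrightarrow>
          lam N s (real s - t) = lam N s t
        \<and> {t' \<in> {0 <..< real s}. lam N s t' = lam N s t} = {t, real s - t})
    \<and> bij_betw (Cf N s) {0 <..< real s} {0 <..< pi}
    \<and> (\<forall>t::real. 0 < t \<and> t < real s \<longrightarrow> Cf N s (real s - t) = pi - Cf N s t)"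
proof (intro conjI allI impI)
  fix t :: real assume "0 < t \<and> t < real s"
  then show "\<exists>!p. is_sol N s t (fst p) (snd p)" using ex1 by blast
next
  have s2: "0 < real s / 2" "real s / 2 < real s" using s1 by auto
  have "is_sol N s (real s / 2) l0 (pi/2)"
  proof -
    have "L (pi/2) = l0" unfolding L_def using arctan_K by simp
    moreover have "G (pi/2) = cos (pi / real N * (real s / 2))" using G_pi2' unfolding th_def by simp
    ultimately show ?thesis using char2[of "real s / 2" l0 "pi/2"] s2 sN by simp
  qed
  then show "lam N s (real s / 2) = pi/2 - pi / (2 * real N) * real s" "Cf N s (real s / 2) = pi/2"
    using the_eq[OF s2] unfolding l0_def by auto
next
  fix t :: real assume "0 < t \<and> t < real s"
  then have t: "0 < t" "t < real s" by auto
  have t': "0 < real s - t" "real s - t < real s" using t by auto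
  have sy: "is_sol N s (real s - t) (lam N s t) (pi - Cf N s t)" using sym[OF lamCf[OF t]] .
  show "lam N s (real s - t) = lam N s t" using the_eq(1)[OF t' sy] .
  show "Cf N s (real s - t) = pi - Cf N s t" using the_eq(2)[OF t' sy] .
next
  fix t :: real assume "0 < t \<and> t < real s"
  then have t: "0 < t" "t < real s" by auto
  have t': "0 < real s - t" "real s - t < real s" using t by auto
  have sy: "is_sol N s (real s - t) (lam N s t) (pi - Cf N s t)" using sym[OF lamCf[OF t]] .
  have ls: "lam N s (real s - t) = lam N s t" using the_eq(1)[OF t' sy] .
  have cs: "Cf N s (real s - t) = pi - Cf N s t" using the_eq(2)[OF t' sy] .
  show "{t' \<in> {0 <..< real s}. lam N s t' = lam N s t} = {t, real s - t}"
  proof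
    show "{t, real s - t} \<subseteq> {t' \<in> {0 <..< real s}. lam N s t' = lam N s t}" using t t' ls by auto
  next
    show "{t' \<in> {0 <..< real s}. lam N s t' = lam N s t} \<subseteq> {t, real s - t}"
    proof
      fix u assume "u \<in> {t' \<in> {0 <..< real s}. lam N s t' = lam N s t}"
      then have u: "0 < u" "u < real s" and lu: "lam N s u = lam N s t" by auto
      have hu: "is_sol N s u (lam N s u) (Cf N s u)" using lamCf[OF u] .
      have ht: "is_sol N s t (lam N s t) (Cf N s t)" using lamCf[OF t] .
      have cu: "0 < Cf N s u" "Cf N s u < pi" "lam N s u = L (Cf N s u)" using hu char by auto
      have ct: "0 < Cf N s t" "Cf N s t < pi" "lam N s t = L (Cf N s t)" using ht char by auto
      have "arctan (K / sin (Cf N s u)) = arctan (K / sin (Cf N s t))" using cu ct lu unfolding L_def by simp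
      then have "K / sin (Cf N s u) = K / sin (Cf N s t)" by (simp add: arctan_eq_iff)
      moreover have "sin (Cf N s u) > 0" "sin (Cf N s t) > 0" using cu ct sin_gt_zero by auto
      ultimately have "sin (Cf N s u) = sin (Cf N s t)" using K_pos by (simp add: field_simps)
      then have "Cf N s u = Cf N s t \<or> Cf N s u = pi - Cf N s t" using sin_eq_0pi cu ct by blast
      then show "u \<in> {t, real s - t}"
      proof
        assume e: "Cf N s u = Cf N s t"
        have "u = t" using t_inj[of u t "lam N s t" "Cf N s t"] hu ht e lu u t sN by simp
        then show ?thesis by simp
      next
        assume e: "Cf N s u = pi - Cf N s t"
        have "u = real s - t" using t_inj[of u "real s - t" "lam N s t" "pi - Cf N s t"] hu sy e lu u t t' sN by simp
        then show ?thesis by simp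
      qed
    qed
  qed
next
  show "bij_betw (Cf N s) {0 <..< real s} {0 <..< pi}"
    unfolding bij_betw_def
  proof
    show "inj_on (Cf N s) {0<..<real s}"
    proof (rule inj_onI)
      fix u v assume u: "u \<in> {0<..<real s}" and v: "v \<in> {0<..<real s}" and e: "Cf N s u = Cf N s v"
      have hu: "is_sol N s u (lam N s u) (Cf N s u)" using lamCf u by auto
      have hv: "is_sol N s v (lam N s v) (Cf N s v)" using lamCf v by auto
      have "lam N s u = L (Cf N s u)" "lam N s v = L (Cf N s v)" using hu hv char by auto
      then have "is_sol N s v (lam N s u) (Cf N s u)" using hv e by simp
      then show "u = v" using t_inj[of u v "lam N s u" "Cf N s u"] hu u v sN by simp
    qed
  next
    show "Cf N s ` {0<..<real s} = {0<..<pi}"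
    proof
      show "Cf N s ` {0<..<real s} \<subseteq> {0<..<pi}"
      proof
        fix c assume "c \<in> Cf N s ` {0<..<real s}"
        then obtain u where u: "0 < u" "u < real s" "c = Cf N s u" by auto
        then show "c \<in> {0<..<pi}" using lamCf[OF u(1,2)] char by auto
      qed
    next
      show "{0<..<pi} \<subseteq> Cf N s ` {0<..<real s}"
      proof
        fix c assume "c \<in> {0<..<pi}"
        then have c: "0 < c" "c < pi" by auto
        define a where "a = arccos (G c)"
        have a: "0 < a" "a < pi" "cos a = G c" using arccos_lt_bounded[of "G c"] G_range[OF c] a_def by auto
        define u where "u = real N * a / pi"
        have au: "pi / real N * u = a" unfolding u_def using Npos by simp
        have u0: "0 < u" unfolding u_def using a Npos by simp
        have uN: "u < real N" unfolding u_def using a Npos by (simp add: field_simps)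
        have hu: "is_sol N s u (L c) c" using char2[OF u0 uN] c a au by simp
        have hs: "is_sol N s (real s - u) (L c) (pi - c)" using sym[OF hu] .
        have "0 < real s - u" using t_pos[OF hs] u0 uN sN by simp
        then have us: "u < real s" by simp
        have "Cf N s u = c" using the_eq(2)[OF u0 us hu] .
        then show "c \<in> Cf N s ` {0<..<real s}" using u0 us by force
      qed
    qed
  qed
qed

end

theorem lemma24:
  fixes N s :: nat
  assumes "N > 2" and "1 \<le> s" and "s < N"
  shows "(\<forall>t::real. 0 < t \<and> t < real s \<longrightarrow> (\<exists>!p. is_sol N s t (fst p) (snd p)))
    \<and> lam N s (real s / 2) = pi/2 - pi / (2 * real N) * real s
    \<and> Cf N s (real s / 2) = pi/2
    \<and> (\<forall>t::real. 0 < t \<and> t < real s \<longrightarrow>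
          lam N s (real s - t) = lam N s t
        \<and> {t' \<in> {0 <..< real s}. lam N s t' = lam N s t} = {t, real s - t})
    \<and> bij_betw (Cf N s) {0 <..< real s} {0 <..< pi}
    \<and> (\<forall>t::real. 0 < t \<and> t < real s \<longrightarrow> Cf N s (real s - t) = pi - Cf N s t)"
proof -
  interpret solctx N s using assms by unfold_locales
  show ?thesis by (rule main)
qed

end
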